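(* Let $\omega\ge 2$ and let $\Gamma$ be a connected, non-complete, $\omega$-clique regular finite simple graph. Then the largest adjacency eigenvalue $\mu_{\max}$ of the line graph $L(\Gamma)$ satisfies $2\omega-4<\mu_{\max}$.
   Context: A graph is $\omega$-clique regular if it has a nonempty edge set and every edge lies in exactly one clique of order $\omega$. $L(\Gamma)$ is the line graph of $\Gamma$ (vertices are edges of $\Gamma$, adjacent iff they share an endpoint). *)

theory Defs
  imports Complex_Main
begin

definition simple_graph :: "'a set \<Rightarrow> 'a set set \<Rightarrow> bool" where
  "simple_graph V E \<longleftrightarrow> finite V \<and> (\<forall>e\<in>E. e \<subseteq> V \<and> card e = 2)"

definition adjacent :: "'a set set \<Rightarrow> 'a \<Rightarrow> 'a \<Rightarrow> bool" where
  "adjacent E u v \<longleftrightarrow> {u, v} \<in> E"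

definition connected_graph :: "'a set \<Rightarrow> 'a set set \<Rightarrow> bool" where
  "connected_graph V E \<longleftrightarrow> V \<noteq> {} \<and>
     (\<forall>u\<in>V. \<forall>v\<in>V. (\<lambda>x y. x \<in> V \<and> y \<in> V \<and> adjacent E x y)\<^sup>*\<^sup>* u v)"

definition complete_graph :: "'a set \<Rightarrow> 'a set set \<Rightarrow> bool" where
  "complete_graph V E \<longleftrightarrow> (\<forall>u\<in>V. \<forall>v\<in>V. u \<noteq> v \<longrightarrow> adjacent E u v)"

definition clique_of_order :: "'a set \<Rightarrow> 'a set set \<Rightarrow> nat \<Rightarrow> 'a set \<Rightarrow> bool" where
  "clique_of_order V E w K \<longleftrightarrow> K \<subseteq> V \<and> card K = w \<and>
     (\<forall>u\<in>K. \<forall>v\<in>K. u \<noteq> v \<longrightarrow> adjacent E u v)"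

definition clique_regular :: "nat \<Rightarrow> 'a set \<Rightarrow> 'a set set \<Rightarrow> bool" where
  "clique_regular w V E \<longleftrightarrow> E \<noteq> {} \<and>
     (\<forall>e\<in>E. \<exists>!K. clique_of_order V E w K \<and> e \<subseteq> K)"

definition line_adj :: "'a set set \<Rightarrow> 'a set \<Rightarrow> 'a set \<Rightarrow> bool" where
  "line_adj E e f \<longleftrightarrow> e \<in> E \<and> f \<in> E \<and> e \<noteq> f \<and> e \<inter> f \<noteq> {}"

definition adj_eigenvalues :: "'b set \<Rightarrow> ('b \<Rightarrow> 'b \<Rightarrow> bool) \<Rightarrow> real set" where
  "adj_eigenvalues W adj = {\<mu>. \<exists>x :: 'b \<Rightarrow> real. (\<exists>v\<in>W. x v \<noteq> 0) \<and>
      (\<forall>v\<in>W. (\<Sum>u\<in>{u\<in>W. adj v u}. x u) = \<mu> * x v)}"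

definition largest_adj_eigenvalue :: "'b set \<Rightarrow> ('b \<Rightarrow> 'b \<Rightarrow> bool) \<Rightarrow> real" where
  "largest_adj_eigenvalue W adj = Max (adj_eigenvalues W adj)"

end

theory Submission
  imports Defs "HOL-Analysis.Function_Topology" "Jordan_Normal_Form.Spectral_Radius"
begin

definition Av :: "'b set \<Rightarrow> ('b \<Rightarrow> 'b \<Rightarrow> bool) \<Rightarrow> ('b \<Rightarrow> real) \<Rightarrow> 'b \<Rightarrow> real" where
  "Av W adj x v = (\<Sum>u\<in>{u\<in>W. adj v u}. x u)"
definition ip :: "'b set \<Rightarrow> ('b \<Rightarrow> real) \<Rightarrow> ('b \<Rightarrow> real) \<Rightarrow> real" where
  "ip W x y = (\<Sum>v\<in>W. x v * y v)"

lemma Av_alt: "finite W \<Longrightarrow> Av W adj x v = (\<Sum>u\<in>W. if adj v u then x u else 0)"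
  unfolding Av_def by (simp add: sum.inter_filter)

lemma ip_sym_Av:
  assumes "finite W" "\<And>u v. u \<in> W \<Longrightarrow> v \<in> W \<Longrightarrow> adj u v = adj v u"
  shows "ip W x (Av W adj y) = ip W y (Av W adj x)"
proof -
  have "ip W x (Av W adj y) = (\<Sum>v\<in>W. \<Sum>u\<in>W. if adj v u then x v * y u else 0)"
    unfolding ip_def Av_alt[OF assms(1)] by (simp add: sum_distrib_left if_distrib cong: if_cong)
  also have "\<dots> = (\<Sum>u\<in>W. \<Sum>v\<in>W. if adj v u then x v * y u else 0)"
    by (rule sum.swap)
  also have "\<dots> = (\<Sum>u\<in>W. \<Sum>v\<in>W. if adj u v then y u * x v else 0)"
    by (intro sum.cong refl) (auto simp: assms(2) mult.commute)
  also have "\<dots> = ip W y (Av W adj x)"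
    unfolding ip_def Av_alt[OF assms(1)] by (simp add: sum_distrib_left if_distrib cong: if_cong)
  finally show ?thesis .
qed

lemma Av_lin: "Av W adj (\<lambda>v. x v + t * y v) w = Av W adj x w + t * Av W adj y w"
  unfolding Av_def by (simp add: sum.distrib sum_distrib_left)

lemma ip_cong: "(\<And>v. v \<in> W \<Longrightarrow> x v = x' v) \<Longrightarrow> (\<And>v. v \<in> W \<Longrightarrow> y v = y' v) \<Longrightarrow> ip W x y = ip W x' y'"
  unfolding ip_def by auto

lemma Av_cong: "(\<And>v. v \<in> W \<Longrightarrow> x v = x' v) \<Longrightarrow> Av W adj x w = Av W adj x' w"
  unfolding Av_def by auto

lemma attain:
  assumes "finite W" "W \<noteq> {}"
  shows "\<exists>x. ip W x x = 1 \<and> (\<forall>y. ip W y y = 1 \<longrightarrow> ip W y (Av W adj y) \<le> ip W x (Av W adj x))"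
proof -
  define T where "T = product_topology (\<lambda>_. euclideanreal) W"
  define C where "C = PiE W (\<lambda>_. {-1..1::real})"
  define S where "S = {x \<in> topspace T. ip W x x \<in> {1}}"
  define q where "q = (\<lambda>x. ip W x (Av W adj x))"
  have cC: "compactin T C" unfolding T_def C_def by (simp add: compactin_PiE)
  have contip: "continuous_map T euclideanreal (\<lambda>x. ip W x x)"
    unfolding ip_def T_def
    by (intro continuous_map_sum assms(1) continuous_map_real_mult continuous_map_product_projection) auto
  have contq: "continuous_map T euclideanreal q"
    unfolding q_def ip_def Av_def T_def
    by (intro continuous_map_sum assms(1) continuous_map_real_mult continuous_map_product_projection) (auto simp: assms(1))
  have clS: "closedin T S" unfolding S_def
    by (rule closedin_continuous_map_preimage[OF contip]) simp
  have sq: "\<bar>x v\<bar> \<le> 1" if "ip W x x = 1" "v \<in> W" for x v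
  proof -
    have "x v * x v \<le> ip W x x" unfolding ip_def
      using member_le_sum[of v W "\<lambda>v. x v * x v"] that assms(1) by auto
    then have "x v ^ 2 \<le> 1 ^ 2" using that by (simp add: power2_eq_square)
    then show ?thesis using abs_le_square_iff[of "x v" 1] by simp
  qed
  have SC: "S \<subseteq> C" unfolding S_def C_def T_def using sq by (auto simp: PiE_iff abs_le_iff extensional_def)
  have cS: "compactin T S" by (rule closed_compactin[OF cC SC clS])
  have "compact (q ` S)" using image_compactin[OF cS contq] by simp
  obtain v0 where v0: "v0 \<in> W" using assms(2) by auto
  define e where "e = restrict (\<lambda>v. if v = v0 then 1 else (0::real)) W"
  have "ip W e e = (\<Sum>v\<in>W. if v = v0 then 1 else 0)" unfolding ip_def e_def
    by (intro sum.cong) auto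
  also have "\<dots> = 1" using v0 assms(1) by simp
  finally have "e \<in> S" unfolding S_def T_def by (auto simp: e_def PiE_iff)
  then have "q ` S \<noteq> {}" by auto
  from compact_attains_sup[OF \<open>compact (q ` S)\<close> this]
  obtain x where x: "x \<in> S" "\<And>z. z \<in> S \<Longrightarrow> q z \<le> q x" by auto
  show ?thesis
  proof (intro exI conjI allI impI)
    show "ip W x x = 1" using x(1) unfolding S_def by auto
    fix y assume y: "ip W y y = 1"
    define y' where "y' = restrict y W"
    have "ip W y' y' = 1" using y unfolding y'_def by (simp add: ip_def)
    then have "y' \<in> S" unfolding S_def T_def y'_def by (auto simp: PiE_iff)
    moreover have "q y' = q y" unfolding q_def y'_def
      by (intro ip_cong Av_cong) auto
    ultimately show "ip W y (Av W adj y) \<le> ip W x (Av W adj x)" using x(2) unfolding q_def by metis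
  qed
qed

lemma quad0:
  fixes b c :: real
  assumes "\<And>t. b * t + c * t ^ 2 \<le> 0"
  shows "b = 0"
proof -
  define d where "d = \<bar>c\<bar> + 1"
  have d: "d > 0" "d + c \<ge> 1" unfolding d_def by auto
  have "b * (b / d) + c * (b / d) ^ 2 \<le> 0" using assms .
  then have "(b * (b / d) + c * (b / d) ^ 2) * d ^ 2 \<le> 0"
    using d by (simp add: mult_nonpos_nonneg)
  moreover have "(b * (b / d) + c * (b / d) ^ 2) * d ^ 2 = b^2 * (d + c)"
    using d by (simp add: field_simps power2_eq_square)
  ultimately have "b^2 * (d + c) \<le> 0" by simp
  moreover have "b^2 * (d + c) \<ge> b^2" using d
    by (metis mult_left_mono mult.right_neutral zero_le_power2)
  ultimately have "b^2 \<le> 0" by linarith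
  then have "b * b = 0" using zero_le_square[of b] by (simp add: power2_eq_square)
  then show ?thesis by simp
qed

lemma ip_sq_nonneg: "ip W y y \<ge> 0"
  unfolding ip_def by (intro sum_nonneg) auto

lemma ip_sq_zero: "finite W \<Longrightarrow> ip W y y = 0 \<Longrightarrow> v \<in> W \<Longrightarrow> y v = 0"
  unfolding ip_def using sum_nonneg_eq_0_iff[of W "\<lambda>v. y v * y v"] by auto

lemma top_eig:
  assumes fin: "finite W" and ne: "W \<noteq> {}"
    and sym: "\<And>u v. u \<in> W \<Longrightarrow> v \<in> W \<Longrightarrow> adj u v = adj v u"
  shows "\<exists>lam x. (\<exists>v\<in>W. x v \<noteq> 0) \<and> (\<forall>v\<in>W. Av W adj x v = lam * x v)
           \<and> (\<forall>y. ip W y (Av W adj y) \<le> lam * ip W y y)"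
proof -
  obtain x where x1: "ip W x x = 1"
    and xmax: "\<And>y. ip W y y = 1 \<Longrightarrow> ip W y (Av W adj y) \<le> ip W x (Av W adj x)"
    using attain[OF fin ne, of adj] by blast
  define lam where "lam = ip W x (Av W adj x)"
  have bound: "ip W y (Av W adj y) \<le> lam * ip W y y" for y
  proof (cases "ip W y y = 0")
    case True
    then have "\<And>v. v \<in> W \<Longrightarrow> y v = 0" using ip_sq_zero[OF fin] by blast
    then have "ip W y (Av W adj y) = 0" unfolding ip_def by simp
    then show ?thesis using True by simp
  next
    case False
    then have pos: "ip W y y > 0" using ip_sq_nonneg[of W y] by linarith
    define s where "s = sqrt (ip W y y)"
    have s: "s > 0" "s^2 = ip W y y" unfolding s_def using pos by auto
    define z where "z = (\<lambda>v. y v / s)"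
    have "ip W z z = ip W y y / s^2" unfolding z_def ip_def
      by (simp add: sum_divide_distrib power2_eq_square)
    then have "ip W z z = 1" using s pos by simp
    then have "ip W z (Av W adj z) \<le> lam" using xmax lam_def by simp
    moreover have "Av W adj z v = Av W adj y v / s" for v
      unfolding z_def Av_def by (simp add: sum_divide_distrib)
    then have "ip W z (Av W adj z) = ip W y (Av W adj y) / s^2" unfolding z_def ip_def
      by (simp add: sum_divide_distrib power2_eq_square)
    ultimately have "ip W y (Av W adj y) / s^2 \<le> lam" by simp
    then show ?thesis using s pos by (simp add: divide_le_eq mult.commute)
  qed
  have lin: "ip W y (Av W adj x) - lam * ip W y x = 0" for y
  proof (rule quad0)
    fix t :: real
    define z where "z = (\<lambda>v. x v + t * y v)"
    have "ip W z (Av W adj z) = lam + 2 * t * ip W y (Av W adj x) + t^2 * ip W y (Av W adj y)"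
    proof -
      have "ip W z (Av W adj z) = ip W x (Av W adj x) + t * ip W x (Av W adj y) + t * ip W y (Av W adj x) + t^2 * ip W y (Av W adj y)"
        unfolding z_def Av_lin ip_def
        by (simp add: algebra_simps sum.distrib sum_distrib_left power2_eq_square)
      then show ?thesis using ip_sym_Av[OF fin sym, where x=x and y=y] lam_def by simp
    qed
    moreover have "ip W z z = 1 + 2 * t * ip W y x + t^2 * ip W y y"
    proof -
      have "ip W z z = ip W x x + 2 * t * ip W y x + t^2 * ip W y y"
        unfolding z_def ip_def
        by (simp add: algebra_simps sum.distrib sum_distrib_left power2_eq_square)
      then show ?thesis using x1 by simp
    qed
    ultimately have "lam + 2 * t * ip W y (Av W adj x) + t^2 * ip W y (Av W adj y) \<le> lam * (1 + 2 * t * ip W y x + t^2 * ip W y y)"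
      using bound[of z] by simp
    then show "(ip W y (Av W adj x) - lam * ip W y x) * t + ((ip W y (Av W adj y) - lam * ip W y y) / 2) * t^2 \<le> 0"
      by (simp add: field_simps)
  qed
  define r where "r = (\<lambda>v. Av W adj x v - lam * x v)"
  have "ip W r r = ip W r (Av W adj x) - lam * ip W r x"
    unfolding r_def ip_def by (simp add: algebra_simps sum_subtractf sum_distrib_left)
  then have "ip W r r = 0" using lin by simp
  then have eig: "\<forall>v\<in>W. Av W adj x v = lam * x v" using ip_sq_zero[OF fin] unfolding r_def by force
  have "\<exists>v\<in>W. x v \<noteq> 0"
  proof (rule ccontr)
    assume "\<not> ?thesis"
    then have "ip W x x = 0" unfolding ip_def by simp
    then show False using x1 by simp
  qed
  then show ?thesis using eig bound by blast
qed

lemma fin_eig: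
  assumes fin: "finite W"
  shows "finite (adj_eigenvalues W adj)"
proof -
  define n where "n = card W"
  obtain f where f: "bij_betw f {0..<n} W" using ex_bij_betw_nat_finite[OF fin] n_def by blast
  define A :: "real mat" where "A = mat n n (\<lambda>(i,j). if adj (f i) (f j) then 1 else 0)"
  have A: "A \<in> carrier_mat n n" unfolding A_def by simp
  have "adj_eigenvalues W adj \<subseteq> spectrum A"
  proof
    fix mu assume "mu \<in> adj_eigenvalues W adj"
    then obtain x where x0: "\<exists>v\<in>W. x v \<noteq> 0"
      and ev: "\<forall>v\<in>W. (\<Sum>u\<in>{u\<in>W. adj v u}. x u) = mu * x v"
      unfolding adj_eigenvalues_def by blast
    define v where "v = vec n (\<lambda>i. x (f i))"
    have "A *\<^sub>v v = mu \<cdot>\<^sub>v v"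
    proof (rule eq_vecI)
      fix i assume "i < dim_vec (mu \<cdot>\<^sub>v v)"
      then have i: "i < n" unfolding v_def by simp
      then have fi: "f i \<in> W" using f by (auto simp: bij_betw_def)
      have "(A *\<^sub>v v) $ i = (\<Sum>j\<in>{0..<n}. (if adj (f i) (f j) then 1 else 0) * x (f j))"
        using i unfolding A_def v_def by (simp add: scalar_prod_def)
      also have "\<dots> = (\<Sum>u\<in>W. (if adj (f i) u then 1 else 0) * x u)"
        using sum.reindex_bij_betw[OF f, of "\<lambda>u. (if adj (f i) u then 1 else 0) * x u"] by simp
      also have "\<dots> = (\<Sum>u\<in>{u\<in>W. adj (f i) u}. x u)"
        by (subst sum.inter_filter[OF fin]) (auto intro: sum.cong)
      also have "\<dots> = mu * x (f i)" using ev fi by blast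
      also have "\<dots> = (mu \<cdot>\<^sub>v v) $ i" using i unfolding v_def by simp
      finally show "(A *\<^sub>v v) $ i = (mu \<cdot>\<^sub>v v) $ i" .
    next
      show "dim_vec (A *\<^sub>v v) = dim_vec (mu \<cdot>\<^sub>v v)" unfolding A_def v_def by simp
    qed
    moreover have "v \<noteq> 0\<^sub>v n"
    proof
      assume v0: "v = 0\<^sub>v n"
      obtain w where w: "w \<in> W" "x w \<noteq> 0" using x0 by blast
      then obtain i where i: "i < n" "f i = w" using f by (auto simp: bij_betw_def)
      have "v $ i = 0" using v0 i by simp
      then show False using i w unfolding v_def by simp
    qed
    ultimately have "eigenvector A v mu" unfolding eigenvector_def A_def v_def by simp
    then show "mu \<in> spectrum A" unfolding spectrum_def eigenvalue_def by blast
  qed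
  then show ?thesis using card_finite_spectrum(1)[OF A] finite_subset by blast
qed

lemma key:
  assumes fin: "finite W" and ne: "W \<noteq> {}"
    and sym: "\<And>u v. u \<in> W \<Longrightarrow> v \<in> W \<Longrightarrow> adj u v = adj v u"
    and y: "c * ip W y y < ip W y (Av W adj y)" "ip W y y > 0"
  shows "c < largest_adj_eigenvalue W adj"
proof -
  obtain lam x where x0: "\<exists>v\<in>W. x v \<noteq> 0" and ev: "\<forall>v\<in>W. Av W adj x v = lam * x v"
    and bd: "\<forall>y. ip W y (Av W adj y) \<le> lam * ip W y y"
    using top_eig[where adj=adj, OF fin ne sym] by blast
  have "lam \<in> adj_eigenvalues W adj" unfolding adj_eigenvalues_def
    using x0 ev unfolding Av_def by blast
  then have "lam \<le> largest_adj_eigenvalue W adj" unfolding largest_adj_eigenvalue_def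
    using fin_eig[OF fin] by simp
  moreover have "c * ip W y y < lam * ip W y y" using y bd by (meson less_le_trans)
  then have "c < lam" using y(2) by simp
  ultimately show ?thesis by simp
qed

lemma expand_Q:
  assumes "finite W" "\<And>u v. u \<in> W \<Longrightarrow> v \<in> W \<Longrightarrow> adj u v = adj v u"
  shows "ip W (\<lambda>v. x v + t * y v) (Av W adj (\<lambda>v. x v + t * y v))
     = ip W x (Av W adj x) + 2 * t * ip W y (Av W adj x) + t^2 * ip W y (Av W adj y)"
proof -
  have "ip W (\<lambda>v. x v + t * y v) (Av W adj (\<lambda>v. x v + t * y v)) = ip W x (Av W adj x) + t * ip W x (Av W adj y) + t * ip W y (Av W adj x) + t^2 * ip W y (Av W adj y)"
    unfolding Av_lin ip_def
    by (simp add: algebra_simps sum.distrib sum_distrib_left power2_eq_square)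
  then show ?thesis using ip_sym_Av[OF assms, where x=x and y=y] by simp
qed

lemma expand_N:
  "ip W (\<lambda>v. x v + t * y v) (\<lambda>v. x v + t * y v) = ip W x x + 2 * t * ip W y x + t^2 * ip W y y"
  unfolding ip_def by (simp add: algebra_simps sum.distrib sum_distrib_left power2_eq_square)

lemma ind_mult: "(if P then 1 else 0) * (a::real) = (if P then a else 0)" by simp

lemma Av_ind: "finite W \<Longrightarrow> Av W adj (\<lambda>e. if e \<in> S then 1 else 0) v = real (card {u\<in>W. adj v u \<and> u \<in> S})"
  unfolding Av_def by (simp add: sum.If_cases Int_def)

theorem corollary1:
  fixes V :: "'a set" and E :: "'a set set" and \<omega> :: nat
  assumes "\<omega> \<ge> 2"
    and "simple_graph V E"
    and "connected_graph V E"
    and "\<not> complete_graph V E"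
    and "clique_regular \<omega> V E"
  shows "2 * real \<omega> - 4 < largest_adj_eigenvalue E (line_adj E)"
proof -
  have w2: "\<omega> \<ge> 2" by fact
  have finV: "finite V" and Esub: "\<And>e. e \<in> E \<Longrightarrow> e \<subseteq> V \<and> card e = 2"
    using assms(2) unfolding simple_graph_def by auto
  have "E \<subseteq> Pow V" using Esub by auto
  then have finE: "finite E" using finV finite_subset by blast
  have neE: "E \<noteq> {}" using assms(5) unfolding clique_regular_def by auto
  have symL: "\<And>u v. u \<in> E \<Longrightarrow> v \<in> E \<Longrightarrow> line_adj E u v = line_adj E v u"
    unfolding line_adj_def by auto
  obtain e0 where e0: "e0 \<in> E" using neE by auto
  then obtain K where K: "clique_of_order V E \<omega> K" "e0 \<subseteq> K"
    using assms(5) unfolding clique_regular_def by blast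
  have KV: "K \<subseteq> V" and cardK: "card K = \<omega>"
    and Kadj: "\<And>u v. u \<in> K \<Longrightarrow> v \<in> K \<Longrightarrow> u \<noteq> v \<Longrightarrow> {u, v} \<in> E"
    using K(1) unfolding clique_of_order_def adjacent_def by auto
  have finK: "finite K" using cardK w2 card.infinite by force
  have "\<exists>f\<in>E. f \<inter> K \<noteq> {} \<and> \<not> f \<subseteq> K"
  proof (rule ccontr)
    assume H0: "\<not> ?thesis"
    have H: "\<And>g. g \<in> E \<Longrightarrow> g \<inter> K \<noteq> {} \<Longrightarrow> g \<subseteq> K" using H0 by blast
    obtain k0 where k0: "k0 \<in> K" using cardK w2 by fastforce
    have reach: "y \<in> K" if "(\<lambda>x y. x \<in> V \<and> y \<in> V \<and> adjacent E x y)\<^sup>*\<^sup>* k0 y" for y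
      using that
    proof (induction rule: rtranclp_induct)
      case base then show ?case using k0 .
    next
      case (step y z)
      then have "{y, z} \<in> E" unfolding adjacent_def by auto
      moreover have "{y, z} \<inter> K \<noteq> {}" using step by auto
      ultimately have "{y, z} \<subseteq> K" by (rule H)
      then show ?case by auto
    qed
    have "V \<subseteq> K"
    proof
      fix v assume v: "v \<in> V"
      have "k0 \<in> V" using k0 KV by blast
      then have "(\<lambda>x y. x \<in> V \<and> y \<in> V \<and> adjacent E x y)\<^sup>*\<^sup>* k0 v"
        using assms(3) v unfolding connected_graph_def by blast
      then show "v \<in> K" by (rule reach)
    qed
    then have "complete_graph V E" unfolding complete_graph_def adjacent_def
      by (auto intro: Kadj)
    then show False using assms(4) by blast
  qed
  then obtain f where f: "f \<in> E" "f \<inter> K \<noteq> {}" "\<not> f \<subseteq> K" by blast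
  then obtain k where k: "k \<in> f" "k \<in> K" by blast
  obtain c where c: "c \<in> K" "c \<noteq> k"
  proof -
    have "card (K - {k}) \<ge> 1" using cardK w2 k finK by simp
    then have "K - {k} \<noteq> {}" by (metis card.empty not_one_le_zero)
    then obtain c where "c \<in> K - {k}" by blast
    then show ?thesis using that by blast
  qed
  define EK where "EK = {e. e \<subseteq> K \<and> card e = 2}"
  have finEK: "finite EK" unfolding EK_def using finK by simp
  have EKE: "EK \<subseteq> E"
  proof
    fix e assume "e \<in> EK"
    then obtain a b where "e = {a, b}" "a \<noteq> b" "a \<in> K" "b \<in> K"
      unfolding EK_def by (auto simp: card_2_iff)
    then show "e \<in> E" using Kadj by blast
  qed
  have fEK: "f \<notin> EK" using f unfolding EK_def by auto
  have kcEK: "{k, c} \<in> EK" unfolding EK_def using k c by auto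
  define m where "m = card EK"
  define t :: real where "t = 1 / real \<omega>"
  define y1 where "y1 = (\<lambda>e. if e \<in> EK then 1 else (0::real))"
  define y2 where "y2 = (\<lambda>e. if e \<in> {f} then 1 else (0::real))"
  define y where "y = (\<lambda>e. y1 e + t * y2 e)"
  have count: "real (card {u\<in>E. line_adj E e u \<and> u \<in> EK}) \<ge> 2 * real \<omega> - 4" if e: "e \<in> EK" for e
  proof -
    obtain a b where ab: "e = {a, b}" "a \<noteq> b" "a \<in> K" "b \<in> K"
      using e unfolding EK_def by (auto simp: card_2_iff)
    define D where "D = K - {a, b}"
    have cD: "card D = \<omega> - 2" unfolding D_def using ab cardK finK by simp
    have finD: "finite D" unfolding D_def using finK by simp
    have inj1: "inj_on (\<lambda>x. {a, x}) D" unfolding D_def inj_on_def by (auto simp: doubleton_eq_iff)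
    have inj2: "inj_on (\<lambda>x. {b, x}) D" unfolding D_def inj_on_def by (auto simp: doubleton_eq_iff)
    have disj: "(\<lambda>x. {a, x}) ` D \<inter> (\<lambda>x. {b, x}) ` D = {}"
      unfolding D_def using ab by (auto simp: doubleton_eq_iff)
    have sub: "(\<lambda>x. {a, x}) ` D \<union> (\<lambda>x. {b, x}) ` D \<subseteq> {u\<in>E. line_adj E e u \<and> u \<in> EK}"
    proof -
      have "{a, x} \<in> EK \<and> {a, x} \<in> E \<and> line_adj E e {a, x}" if "x \<in> D" for x
      proof -
        have x: "x \<in> K" "x \<noteq> a" "x \<noteq> b" using that unfolding D_def by auto
        have "{a, x} \<in> EK" using x ab unfolding EK_def by auto
        moreover have "e \<noteq> {a, x}" using x ab by (auto simp: doubleton_eq_iff)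
        ultimately show ?thesis using EKE e ab unfolding line_adj_def by auto
      qed
      moreover have "{b, x} \<in> EK \<and> {b, x} \<in> E \<and> line_adj E e {b, x}" if "x \<in> D" for x
      proof -
        have x: "x \<in> K" "x \<noteq> a" "x \<noteq> b" using that unfolding D_def by auto
        have "{b, x} \<in> EK" using x ab unfolding EK_def by auto
        moreover have "e \<noteq> {b, x}" using x ab by (auto simp: doubleton_eq_iff)
        ultimately show ?thesis using EKE e ab unfolding line_adj_def by auto
      qed
      ultimately show ?thesis by blast
    qed
    have "card ((\<lambda>x. {a, x}) ` D \<union> (\<lambda>x. {b, x}) ` D) = 2 * (\<omega> - 2)"
      using card_Un_disjoint[OF _ _ disj] finD card_image[OF inj1] card_image[OF inj2] cD by simp
    moreover have "finite {u\<in>E. line_adj E e u \<and> u \<in> EK}" using finE by simp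
    ultimately have "2 * (\<omega> - 2) \<le> card {u\<in>E. line_adj E e u \<and> u \<in> EK}"
      using card_mono[OF _ sub] by metis
    then show ?thesis using w2 by linarith
  qed
  have Q1: "ip E y1 (Av E (line_adj E) y1) \<ge> real m * (2 * real \<omega> - 4)"
  proof -
    have "ip E y1 (Av E (line_adj E) y1) = (\<Sum>e\<in>EK. real (card {u\<in>E. line_adj E e u \<and> u \<in> EK}))"
    proof -
      let ?g = "\<lambda>e. real (card {u\<in>E. line_adj E e u \<and> u \<in> EK})"
      have "ip E y1 (Av E (line_adj E) y1) = (\<Sum>v\<in>E. if v \<in> EK then ?g v else 0)"
        unfolding ip_def y1_def Av_ind[OF finE] by (intro sum.cong) auto
      also have "\<dots> = sum ?g (E \<inter> EK)" by (simp add: sum.inter_restrict finE)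
      also have "E \<inter> EK = EK" using EKE by blast
      finally show ?thesis .
    qed
    also have "\<dots> \<ge> (\<Sum>e\<in>EK. 2 * real \<omega> - 4)" using count by (intro sum_mono) auto
    finally show ?thesis unfolding m_def by simp
  qed
  have B: "ip E y2 (Av E (line_adj E) y1) \<ge> 1"
  proof -
    have "ip E y2 (Av E (line_adj E) y1) = real (card {u\<in>E. line_adj E f u \<and> u \<in> EK})"
      unfolding ip_def y2_def y1_def Av_ind[OF finE] using f(1) finE
      by (simp add: ind_mult)
    moreover have "{k, c} \<in> {u\<in>E. line_adj E f u \<and> u \<in> EK}"
      using kcEK EKE f fEK k unfolding line_adj_def by auto
    then have "{u\<in>E. line_adj E f u \<and> u \<in> EK} \<noteq> {}" by blast
    then have "card {u\<in>E. line_adj E f u \<and> u \<in> EK} > 0" using finE by (simp add: card_gt_0_iff)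
    then have "card {u\<in>E. line_adj E f u \<and> u \<in> EK} \<ge> 1" by simp
    ultimately show ?thesis by simp
  qed
  have Q2: "ip E y2 (Av E (line_adj E) y2) = 0"
    unfolding ip_def y2_def Av_ind[OF finE] using f(1) finE
    by (simp add: sum.If_cases Int_def line_adj_def)
  have N1: "ip E y1 y1 = real m"
  proof -
    have "ip E y1 y1 = (\<Sum>v\<in>E. if v \<in> EK then (1::real) else 0)"
      unfolding ip_def y1_def by (intro sum.cong) auto
    also have "\<dots> = sum (\<lambda>_. 1) (E \<inter> EK)" by (rule sum.inter_restrict[OF finE, symmetric])
    also have "E \<inter> EK = EK" using EKE by blast
    finally show ?thesis unfolding m_def by simp
  qed
  have N12: "ip E y2 y1 = 0" unfolding ip_def y1_def y2_def using fEK by (simp add: sum.If_cases)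
  have N2: "ip E y2 y2 = 1" unfolding ip_def y2_def using f(1) finE by (simp add: ind_mult)
  have Ny: "ip E y y = real m + t^2"
    unfolding y_def expand_N N1 N12 N2 by simp
  have Qy: "ip E y (Av E (line_adj E) y) \<ge> real m * (2 * real \<omega> - 4) + 2 * t"
  proof -
    have "ip E y (Av E (line_adj E) y) = ip E y1 (Av E (line_adj E) y1) + 2 * t * ip E y2 (Av E (line_adj E) y1)"
      using expand_Q[where adj="line_adj E" and x=y1 and y=y2 and t=t, OF finE symL] Q2
      unfolding y_def by simp
    moreover have "t > 0" unfolding t_def using w2 by simp
    moreover have "2 * t * ip E y2 (Av E (line_adj E) y1) \<ge> 2 * t * 1"
      using B \<open>t > 0\<close> by (intro mult_left_mono) auto
    ultimately show ?thesis using Q1 by linarith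
  qed
  have tpos: "t > 0" unfolding t_def using w2 by simp
  have "t * (2 * real \<omega> - 4) < 2"
  proof -
    have "t * (2 * real \<omega> - 4) = 2 - 4 / real \<omega>" unfolding t_def using w2 by (simp add: field_simps)
    then show ?thesis using w2 by simp
  qed
  then have "t^2 * (2 * real \<omega> - 4) < 2 * t" using tpos
    by (metis mult.assoc mult_less_cancel_left_pos power2_eq_square mult.commute)
  then have "(2 * real \<omega> - 4) * ip E y y < ip E y (Av E (line_adj E) y)"
    using Qy unfolding Ny by (simp add: algebra_simps)
  moreover have "ip E y y > 0" unfolding Ny using tpos by (simp add: add_nonneg_pos)
  ultimately show ?thesis using key[where adj="line_adj E", OF finE neE symL] by blast
qed

end
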